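(* In the contention game with $k=2$ channels and $n\ge2$ players, if all players use the protocol $f^2$ (in every slot, regardless of history, a pending player transmits on each of the two channels with probability $1/2$ and never stays idle), then the expected latency of any player is $2^n/n$.
   Context: Contention game: $n$ players, channels $K=\{1,\dots,k\}$, slots $t=1,2,\dots$; each player has one packet and is initially pending. In each slot a pending player chooses an action in $\{0,1,\dots,k\}$ ($0$ = idle, $a$ = transmit on channel $a$). A lone transmitter on a channel succeeds and leaves the game; two or more transmitters on the same channel collide and remain pending. The latency of a player is the slot in which she transmits successfully. *)

theory Defs
  imports "HOL-Probability.Probability"
begin

text \<open>Randomness of protocol f^2 with k = 2 channels: an outcome w assigns to every
  slot index t (slot t+1) and player i the channel w (t, i) in {1,2}, chosen uniformly and
  independently of everything else (history-independent; only the choices of pending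
  players matter).\<close>

definition channel_space :: "(nat \<times> nat \<Rightarrow> nat) measure" where
  "channel_space = PiM UNIV (\<lambda>_. measure_pmf (pmf_of_set {1, 2::nat}))"

definition succeeders :: "(nat \<times> nat \<Rightarrow> nat) \<Rightarrow> nat \<Rightarrow> nat set \<Rightarrow> nat set" where
  "succeeders w t P = {i \<in> P. \<forall>j \<in> P. j \<noteq> i \<longrightarrow> w (t, j) \<noteq> w (t, i)}"

fun pending :: "(nat \<times> nat \<Rightarrow> nat) \<Rightarrow> nat \<Rightarrow> nat \<Rightarrow> nat set" where
  "pending w n 0 = {0..<n}"
| "pending w n (Suc t) = pending w n t - succeeders w t (pending w n t)"

definition latency :: "nat \<Rightarrow> nat \<Rightarrow> (nat \<times> nat \<Rightarrow> nat) \<Rightarrow> ennreal" where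
  "latency n i w = (if \<exists>t. i \<notin> pending w n t
     then of_nat (LEAST t. i \<notin> pending w n t) else \<infinity>)"

end

theory Submission
  imports Defs
begin

abbreviation MM :: "nat measure" where "MM \<equiv> measure_pmf (pmf_of_set {1,2::nat})"
definition M0 :: "(nat \<Rightarrow> nat) measure" where "M0 = PiM UNIV (\<lambda>_. MM)"
definition jn :: "(nat \<Rightarrow> nat) \<Rightarrow> (nat \<times> nat \<Rightarrow> nat) \<Rightarrow> (nat \<times> nat \<Rightarrow> nat)" where
  "jn x w = (\<lambda>(t,j). case t of 0 \<Rightarrow> x j | Suc t' \<Rightarrow> w (t', j))"

interpretation C: product_prob_space "\<lambda>_::nat\<times>nat. MM" UNIV
  by unfold_locales

interpretation Z: product_prob_space "\<lambda>_::nat. MM" UNIV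
  by unfold_locales

lemma prob_C: "prob_space channel_space"
  unfolding channel_space_def by (rule C.P.prob_space_axioms)
lemma prob_M0: "prob_space M0"
  unfolding M0_def by (rule Z.P.prob_space_axioms)

lemma space_C[simp]: "space channel_space = UNIV"
  by (auto simp: channel_space_def space_PiM)
lemma space_M0[simp]: "space M0 = UNIV"
  by (auto simp: M0_def space_PiM)

lemma emb_eq: "prod_emb UNIV (\<lambda>_. measure_pmf pp) K (PiE K F) = {\<omega>. \<forall>k\<in>K. \<omega> k \<in> F k}"
  by (auto simp: prod_emb_def space_PiM PiE_iff)

lemma jn_simps[simp]: "jn x w (0,j) = x j" "jn x w (Suc t, j) = w (t,j)"
  by (auto simp: jn_def)

lemma measurable_join[measurable]:
  "(\<lambda>(x,w). jn x w) \<in> measurable (M0 \<Otimes>\<^sub>M channel_space) channel_space"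
  unfolding channel_space_def
proof (rule measurable_PiM_single')
  fix i :: "nat\<times>nat" 
  obtain t j where i: "i = (t,j)" by fastforce
  show "(\<lambda>\<omega>. (case \<omega> of (x, w) \<Rightarrow> jn x w) i) \<in> measurable (M0 \<Otimes>\<^sub>M PiM UNIV (\<lambda>_. MM)) MM"
  proof (cases t)
    case 0
    then have "(\<lambda>\<omega>. (case \<omega> of (x, w) \<Rightarrow> jn x w) i) = (\<lambda>\<omega>. fst \<omega> j)"
      by (auto simp: i jn_def split_beta)
    then show ?thesis unfolding M0_def by simp
  next
    case (Suc t')
    then have "(\<lambda>\<omega>. (case \<omega> of (x, w) \<Rightarrow> jn x w) i) = (\<lambda>\<omega>. snd \<omega> (t',j))"
      by (auto simp: i jn_def split_beta)
    then show ?thesis by simp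
  qed
qed (auto simp: space_PiM)

lemma split_C: "distr (M0 \<Otimes>\<^sub>M channel_space) channel_space (\<lambda>(x,w). jn x w) = channel_space"
proof -
  interpret PS: pair_sigma_finite M0 channel_space
    using prob_M0 prob_C by (simp add: pair_sigma_finite_def prob_space_imp_sigma_finite)
  show ?thesis
  unfolding channel_space_def
  proof (rule C.PiM_eq)
    fix J :: "(nat\<times>nat) set" and F assume J: "finite J"
    define J0 where "J0 = Pair 0 -` J"
    define J1 where "J1 = (\<lambda>(t,j). (Suc t, j)) -` J"
    have fJ0: "finite J0" unfolding J0_def using J by (intro finite_vimageI) (auto simp: inj_on_def)
    have fJ1: "finite J1" unfolding J1_def using J by (intro finite_vimageI) (auto simp: inj_on_def)
    let ?X = "prod_emb UNIV (\<lambda>_. MM) J (PiE J F)"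
    let ?A0 = "prod_emb UNIV (\<lambda>_. MM) J0 (PiE J0 (\<lambda>j. F (0,j)))"
    let ?A1 = "prod_emb UNIV (\<lambda>_. MM) J1 (PiE J1 (\<lambda>p. F (Suc (fst p), snd p)))"
    have pre: "(\<lambda>(x,w). jn x w) -` ?X \<inter> space (M0 \<Otimes>\<^sub>M channel_space) = ?A0 \<times> ?A1"
    proof -
      have "(\<forall>k\<in>J. jn x w k \<in> F k) \<longleftrightarrow> (\<forall>j\<in>J0. x j \<in> F (0,j)) \<and> (\<forall>p\<in>J1. w p \<in> F (Suc (fst p), snd p))" for x w
      proof
        assume H: "\<forall>k\<in>J. jn x w k \<in> F k"
        show "(\<forall>j\<in>J0. x j \<in> F (0,j)) \<and> (\<forall>p\<in>J1. w p \<in> F (Suc (fst p), snd p))"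
          using H unfolding J0_def J1_def by (auto simp: split_beta)
      next
        assume H: "(\<forall>j\<in>J0. x j \<in> F (0,j)) \<and> (\<forall>p\<in>J1. w p \<in> F (Suc (fst p), snd p))"
        show "\<forall>k\<in>J. jn x w k \<in> F k"
        proof
          fix k assume k: "k \<in> J"
          obtain t j where kk: "k = (t,j)" by fastforce
          show "jn x w k \<in> F k"
          proof (cases t)
            case 0 then show ?thesis using H k kk unfolding J0_def by auto
          next
            case (Suc t')
            have "(t',j) \<in> J1" using k kk Suc unfolding J1_def by auto
            then show ?thesis using H kk Suc by auto
          qed
        qed
      qed
      note eqv = this
      show ?thesis
      proof (rule set_eqI)
        fix p :: "(nat \<Rightarrow> nat) \<times> (nat \<times> nat \<Rightarrow> nat)"
        obtain x w where p: "p = (x,w)" by fastforce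
        show "p \<in> (\<lambda>(x,w). jn x w) -` ?X \<inter> space (M0 \<Otimes>\<^sub>M channel_space) \<longleftrightarrow> p \<in> ?A0 \<times> ?A1"
          using eqv[of x w] by (simp add: emb_eq space_pair_measure p)
      qed
    qed
    have "emeasure (distr (M0 \<Otimes>\<^sub>M channel_space) channel_space (\<lambda>(x, w). jn x w)) ?X
       = emeasure (M0 \<Otimes>\<^sub>M channel_space) (?A0 \<times> ?A1)"
      apply (subst emeasure_distr[OF measurable_join])
      subgoal unfolding channel_space_def by (rule sets_PiM_I) (use J in auto)
      using pre by simp
    also have "\<dots> = emeasure M0 ?A0 * emeasure channel_space ?A1"
      by (rule sigma_finite_measure.emeasure_pair_measure_Times[OF prob_space_imp_sigma_finite[OF prob_C]])
        (unfold M0_def channel_space_def; rule sets_PiM_I; use fJ0 fJ1 in auto)+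
    also have "emeasure M0 ?A0 = (\<Prod>j\<in>J0. emeasure MM (F (0,j)))"
      unfolding M0_def using fJ0 by (intro emeasure_PiM_emb) (auto simp: prob_space_measure_pmf)
    also have "emeasure channel_space ?A1 = (\<Prod>p\<in>J1. emeasure MM (F (Suc (fst p), snd p)))"
      unfolding channel_space_def using fJ1 by (intro emeasure_PiM_emb) (auto simp: prob_space_measure_pmf)
    also have "(\<Prod>j\<in>J0. emeasure MM (F (0,j))) * (\<Prod>p\<in>J1. emeasure MM (F (Suc (fst p), snd p)))
        = (\<Prod>j\<in>J. emeasure MM (F j))"
    proof -
      have J: "J = Pair 0 ` J0 \<union> (\<lambda>(t,j). (Suc t, j)) ` J1"
      proof (rule set_eqI)
        fix k :: "nat \<times> nat"
        obtain t j where kk: "k = (t,j)" by fastforce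
        show "k \<in> J \<longleftrightarrow> k \<in> Pair 0 ` J0 \<union> (\<lambda>(t,j). (Suc t, j)) ` J1"
        proof (cases t)
          case 0 then show ?thesis unfolding J0_def J1_def kk by auto
        next
          case (Suc t')
          have "k \<in> (\<lambda>(t,j). (Suc t, j)) ` J1 \<longleftrightarrow> (t',j) \<in> J1" unfolding kk Suc by auto
          then show ?thesis unfolding J0_def J1_def kk Suc by auto
        qed
      qed
      have "(\<Prod>j\<in>J. emeasure MM (F j)) = (\<Prod>j\<in>Pair 0 ` J0. emeasure MM (F j)) * (\<Prod>j\<in>(\<lambda>(t,j). (Suc t, j)) ` J1. emeasure MM (F j))"
        by (subst J, rule prod.union_disjoint) (use fJ0 fJ1 in auto)
      also have "\<dots> = (\<Prod>j\<in>J0. emeasure MM (F (0,j))) * (\<Prod>p\<in>J1. emeasure MM (F (Suc (fst p), snd p)))"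
        by (subst prod.reindex, simp add: inj_on_def, subst prod.reindex) (auto simp: inj_on_def split_beta)
      finally show ?thesis by simp
    qed
    finally have "emeasure (distr (M0 \<Otimes>\<^sub>M channel_space) channel_space (\<lambda>(x, w). jn x w)) ?X
       = (\<Prod>j\<in>J. emeasure MM (F j))" .
    then show "emeasure (distr (M0 \<Otimes>\<^sub>M Pi\<^sub>M UNIV (\<lambda>_. MM)) (Pi\<^sub>M UNIV (\<lambda>_. MM)) (\<lambda>(x, w). jn x w)) ?X
       = (\<Prod>j\<in>J. emeasure MM (F j))" by (simp only: channel_space_def)
  qed simp
qed

fun pend :: "(nat \<times> nat \<Rightarrow> nat) \<Rightarrow> nat set \<Rightarrow> nat \<Rightarrow> nat set" where
  "pend w P 0 = P"
| "pend w P (Suc t) = pend w P t - succeeders w t (pend w P t)"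

lemma pending_pend: "pending w n t = pend w {0..<n} t"
  by (induct t) auto

definition succ0 :: "(nat \<Rightarrow> nat) \<Rightarrow> nat set \<Rightarrow> nat set" where
  "succ0 x P = {i \<in> P. \<forall>j \<in> P. j \<noteq> i \<longrightarrow> x j \<noteq> x i}"

lemma succ_jn0: "succeeders (jn x w) 0 P = succ0 x P"
  by (simp add: succeeders_def succ0_def)

lemma succ_jnS: "succeeders (jn x w) (Suc t) P = succeeders w t P"
  by (simp add: succeeders_def)

lemma pend_shift: "pend (jn x w) P (Suc t) = pend w (P - succ0 x P) t"
  by (induct t) (auto simp: succ_jn0 succ_jnS)

lemma pend_sub: "pend w P t \<subseteq> P"
  by (induct t) auto

lemma sets_succ: "finite Q' \<Longrightarrow> {w. Q' - succeeders w t Q' = Q} \<in> sets channel_space"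
proof -
  assume fin: "finite Q'"
  have "{w. Q' - succeeders w t Q' = Q} =
     {w \<in> space channel_space. \<forall>k\<in>Q'. (k \<in> Q \<longleftrightarrow> \<not> (\<forall>j\<in>Q'. j \<noteq> k \<longrightarrow> w (t,j) \<noteq> w (t,k)))}
     \<inter> (if Q \<subseteq> Q' then UNIV else {})"
    by (auto simp: succeeders_def)
  also have "\<dots> \<in> sets channel_space"
    unfolding channel_space_def using fin by measurable
  finally show ?thesis .
qed

lemma sets_pend: "finite P \<Longrightarrow> {w. pend w P t = Q} \<in> sets channel_space"
proof (induct t arbitrary: Q)
  case 0
  then show ?case using sets.top[of channel_space] by (cases "P = Q") auto
next
  case (Suc t)
  have "{w. pend w P (Suc t) = Q} = (\<Union>Q'\<in>Pow P. {w. pend w P t = Q'} \<inter> {w. Q' - succeeders w t Q' = Q})"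
    using pend_sub by auto
  also have "\<dots> \<in> sets channel_space"
    using Suc by (intro sets.finite_UN sets.Int sets_succ) (auto intro: finite_subset)
  finally show ?case .
qed

lemma sets_pend_mem: "finite P \<Longrightarrow> {w. i \<in> pend w P t} \<in> sets channel_space"
proof -
  assume fin: "finite P"
  have "{w. i \<in> pend w P t} = (\<Union>Q\<in>{Q. Q \<subseteq> P \<and> i \<in> Q}. {w. pend w P t = Q})"
    using pend_sub by auto
  also have "\<dots> \<in> sets channel_space"
    using fin by (intro sets.finite_UN sets_pend) auto
  finally show ?thesis .
qed

lemma meas_ind[measurable]: "finite P \<Longrightarrow> (\<lambda>w. indicator {w. i \<in> pend w P t} w :: ennreal) \<in> borel_measurable channel_space"
  by (intro borel_measurable_indicator sets_pend_mem)

definition Gt :: "nat \<Rightarrow> nat \<Rightarrow> nat set \<Rightarrow> ennreal" where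
  "Gt i T P = (\<integral>\<^sup>+ w. (\<Sum>t<T. indicator {w. i \<in> pend w P t} w) \<partial>channel_space)"

lemma sfC: "sigma_finite_measure channel_space"
  by (rule prob_space_imp_sigma_finite[OF prob_C])

lemma Gt_Suc:
  assumes fin: "finite P"
  shows "Gt i (Suc T) P = indicator P i + (\<integral>\<^sup>+ x. Gt i T (P - succ0 x P) \<partial>M0)"
proof -
  define f where "f = (\<lambda>w. \<Sum>t<T. indicator {w. i \<in> pend w P (Suc t)} w :: ennreal)"
  have fm: "f \<in> borel_measurable channel_space"
    unfolding f_def using fin by (intro borel_measurable_sum meas_ind) 
  have "Gt i (Suc T) P = (\<integral>\<^sup>+ w. indicator P i + f w \<partial>channel_space)"
  proof -
    have e: "\<And>w. indicator {w. i \<in> pend w P 0} w = (indicator P i :: ennreal)" by (simp add: indicator_def)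
    show ?thesis unfolding Gt_def f_def sum.lessThan_Suc_shift by (simp only: e)
  qed
  also have "\<dots> = indicator P i + integral\<^sup>N channel_space f"
    using fm prob_space.emeasure_space_1[OF prob_C] by (simp add: nn_integral_add)
  also have "integral\<^sup>N channel_space f = integral\<^sup>N (distr (M0 \<Otimes>\<^sub>M channel_space) channel_space (\<lambda>(x,w). jn x w)) f"
    by (simp only: split_C)
  also have "\<dots> = (\<integral>\<^sup>+ p. f ((\<lambda>(x,w). jn x w) p) \<partial>(M0 \<Otimes>\<^sub>M channel_space))"
    by (rule nn_integral_distr[OF measurable_join]) (simp only: split_C fm)
  also have "\<dots> = (\<integral>\<^sup>+ x. \<integral>\<^sup>+ w. f ((\<lambda>(x,w). jn x w) (x,w)) \<partial>channel_space \<partial>M0)"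
    by (rule sigma_finite_measure.nn_integral_fst[OF sfC, symmetric])
       (rule measurable_compose[OF measurable_join fm])
  also have "\<dots> = (\<integral>\<^sup>+ x. Gt i T (P - succ0 x P) \<partial>M0)"
  proof -
    have e: "\<And>x w t. indicator {w. i \<in> pend w P (Suc t)} (jn x w) = (indicator {w. i \<in> pend w (P - succ0 x P) t} w :: ennreal)"
      by (simp only: indicator_def mem_Collect_eq pend_shift)
    show ?thesis unfolding f_def Gt_def by (simp only: e split_conv)
  qed
  finally show ?thesis .
qed

definition cyl :: "nat set \<Rightarrow> (nat \<Rightarrow> nat) \<Rightarrow> (nat \<Rightarrow> nat) set" where
  "cyl P c = {x. \<forall>k\<in>P. x k = c k}"

definition VV :: "nat set \<Rightarrow> (nat \<Rightarrow> nat) set" where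
  "VV P = {x. \<forall>k\<in>P. x k \<in> {1,2}}"

lemma cyl_emb: "cyl P c = prod_emb UNIV (\<lambda>_. MM) P (PiE P (\<lambda>k. {c k}))"
  by (simp add: emb_eq cyl_def)

lemma VV_emb: "VV P = prod_emb UNIV (\<lambda>_. MM) P (PiE P (\<lambda>k. {1,2}))"
  by (simp add: emb_eq VV_def)

lemma cyl_sets[measurable]: "finite P \<Longrightarrow> cyl P c \<in> sets M0"
  unfolding cyl_emb M0_def by (rule sets_PiM_I) auto

lemma VV_sets[measurable]: "finite P \<Longrightarrow> VV P \<in> sets M0"
  unfolding VV_emb M0_def by (rule sets_PiM_I) auto

lemma pmf_12: "c \<in> {1,2} \<Longrightarrow> pmf (pmf_of_set {1,2::nat}) c = 1/2"
  by (subst pmf_of_set) auto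

lemma em_single: "c \<in> {1,2} \<Longrightarrow> emeasure MM {c} = ennreal (1/2)"
  by (simp only: emeasure_pmf_single pmf_12)

lemma em_12: "emeasure MM {1,2} = 1"
  by (subst emeasure_measure_pmf_finite) (auto simp: pmf_12 ennreal_plus[symmetric] simp del: ennreal_plus)

lemma cyl_em: "finite P \<Longrightarrow> (\<forall>k\<in>P. c k \<in> {1,2}) \<Longrightarrow> emeasure M0 (cyl P c) = ennreal ((1/2) ^ card P)"
proof -
  assume fin: "finite P" and c: "\<forall>k\<in>P. c k \<in> {1,2}"
  have "emeasure M0 (cyl P c) = (\<Prod>k\<in>P. emeasure MM {c k})"
    unfolding cyl_emb M0_def using fin by (intro emeasure_PiM_emb) (auto simp: prob_space_measure_pmf)
  also have "\<dots> = (\<Prod>k\<in>P. ennreal (1/2))"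
    using c by (intro prod.cong refl em_single) auto
  also have "\<dots> = ennreal ((1/2) ^ card P)"
    by (simp only: prod_constant) (rule ennreal_power, simp)
  finally show ?thesis .
qed

lemma VV_em: "finite P \<Longrightarrow> emeasure M0 (VV P) = 1"
proof -
  assume fin: "finite P"
  have "emeasure M0 (VV P) = (\<Prod>k\<in>P. emeasure MM {1,2})"
    unfolding VV_emb M0_def using fin by (intro emeasure_PiM_emb) (auto simp: prob_space_measure_pmf)
  also have "\<dots> = 1" by (simp only: em_12 prod.neutral_const)
  finally show ?thesis .
qed

definition cc :: "nat \<Rightarrow> nat \<Rightarrow> nat" where "cc j = (\<lambda>k. if k = j then 1 else 2)"
definition dd :: "nat \<Rightarrow> nat \<Rightarrow> nat" where "dd j = (\<lambda>k. if k = j then 2 else 1)"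

lemma third:
  assumes "finite P" "card P \<ge> 3" "j \<in> P" "k \<in> P"
  shows "\<exists>k'\<in>P. k' \<noteq> j \<and> k' \<noteq> k"
proof (rule ccontr)
  assume "\<not> ?thesis"
  then have "P \<subseteq> {j,k}" by auto
  then have "card P \<le> card {j,k}" by (intro card_mono) auto
  also have "\<dots> \<le> 2" by (simp add: card_insert_if)
  finally show False using assms by simp
qed

lemma A3:
  assumes fin: "finite P" and m: "card P \<ge> 3" and j: "j \<in> P"
  shows "{x \<in> VV P. succ0 x P = {j}} = cyl P (cc j) \<union> cyl P (dd j)"
proof (rule set_eqI)
  fix x
  show "x \<in> {x \<in> VV P. succ0 x P = {j}} \<longleftrightarrow> x \<in> cyl P (cc j) \<union> cyl P (dd j)"
  proof
    assume H: "x \<in> {x \<in> VV P. succ0 x P = {j}}"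
    then have V: "\<forall>k\<in>P. x k \<in> {1,2}" by (simp add: VV_def)
    from H have "j \<in> succ0 x P" by simp
    then have S: "\<forall>k\<in>P. k \<noteq> j \<longrightarrow> x k \<noteq> x j" by (simp add: succ0_def)
    show "x \<in> cyl P (cc j) \<union> cyl P (dd j)"
    proof (cases "x j = 1")
      case True
      then have "\<forall>k\<in>P. x k = cc j k" using V S by (auto simp: cc_def)
      then show ?thesis by (simp add: cyl_def)
    next
      case False
      then have "x j = 2" using V j by auto
      then have "\<forall>k\<in>P. x k = dd j k" using V S by (auto simp: dd_def)
      then show ?thesis by (simp add: cyl_def)
    qed
  next
    assume H: "x \<in> cyl P (cc j) \<union> cyl P (dd j)"
    then have X: "(\<forall>k\<in>P. x k = cc j k) \<or> (\<forall>k\<in>P. x k = dd j k)" by (auto simp: cyl_def)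
    have V: "x \<in> VV P" using X by (auto simp: VV_def cc_def dd_def split: if_split_asm)
    have "succ0 x P = {j}"
    proof (rule set_eqI)
      fix k
      show "k \<in> succ0 x P \<longleftrightarrow> k \<in> {j}"
      proof
        assume k: "k \<in> succ0 x P"
        show "k \<in> {j}"
        proof (rule ccontr)
          assume kj: "k \<notin> {j}"
          from k have kP: "k \<in> P" and kk: "\<forall>l\<in>P. l \<noteq> k \<longrightarrow> x l \<noteq> x k" by (auto simp: succ0_def)
          obtain k' where k': "k' \<in> P" "k' \<noteq> j" "k' \<noteq> k" using third[OF fin m j kP] by blast
          have "x k' = x k" using X k' kP kj by (auto simp: cc_def dd_def)
          then show False using kk k' by auto
        qed
      next
        assume "k \<in> {j}"
        then show "k \<in> succ0 x P" using X j by (auto simp: succ0_def cc_def dd_def)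
      qed
    qed
    then show "x \<in> {x \<in> VV P. succ0 x P = {j}}" using V by simp
  qed
qed

lemma part3:
  assumes fin: "finite P" and m: "card P \<ge> 3" and x: "x \<in> VV P"
  shows "succ0 x P = {} \<or> (\<exists>j\<in>P. succ0 x P = {j})"
proof (rule ccontr)
  assume H: "\<not> ?thesis"
  then obtain j where j: "j \<in> succ0 x P" by blast
  have jP: "j \<in> P" using j by (simp add: succ0_def)
  have "succ0 x P \<noteq> {j}" using H jP by blast
  then obtain k where jk: "k \<in> succ0 x P" "j \<noteq> k" using j by blast
  then have P: "j \<in> P" "k \<in> P" using jP by (auto simp: succ0_def)
  obtain l where l: "l \<in> P" "l \<noteq> j" "l \<noteq> k" using third[OF fin m P] by blast
  have "x j \<noteq> x k" "x l \<noteq> x j" "x l \<noteq> x k" using j jk P l by (auto simp: succ0_def)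
  moreover have "x j \<in> {1,2}" "x k \<in> {1,2}" "x l \<in> {1,2}" using x P l by (auto simp: VV_def)
  ultimately show False by auto
qed

lemma two_elems:
  assumes m: "card P = 2" and j: "j \<in> P"
  obtains k where "P = {j,k}" "k \<noteq> j"
proof -
  obtain a b where ab: "P = {a,b}" "a \<noteq> b" using m by (auto simp: card_2_iff)
  show ?thesis
  proof (cases "j = a")
    case True then show ?thesis using ab that by auto
  next
    case False then have "j = b" using ab j by auto
    then show ?thesis using ab that by (auto simp: insert_commute)
  qed
qed

lemma A2:
  assumes m: "card P = 2" and j: "j \<in> P"
  shows "{x \<in> VV P. succ0 x P = P} = cyl P (cc j) \<union> cyl P (dd j)"
proof -
  obtain k where P: "P = {j,k}" "k \<noteq> j" using two_elems[OF m j] by blast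
  have s: "succ0 x P = P \<longleftrightarrow> x j \<noteq> x k" for x
    unfolding P(1) succ0_def using P(2) by auto
  have v: "VV P = {x. x j \<in> {1,2} \<and> x k \<in> {1,2}}" unfolding P(1) VV_def by auto
  have c: "cyl P (cc j) = {x. x j = 1 \<and> x k = 2}" unfolding P(1) cyl_def cc_def using P(2) by auto
  have d: "cyl P (dd j) = {x. x j = 2 \<and> x k = 1}" unfolding P(1) cyl_def dd_def using P(2) by auto
  show ?thesis unfolding v c d using s by auto
qed

lemma part2:
  assumes m: "card P = 2" and x: "x \<in> VV P"
  shows "succ0 x P = {} \<or> succ0 x P = P"
proof -
  obtain j k where P: "P = {j,k}" "j \<noteq> k"
    using m by (auto simp: card_2_iff)
  have "succ0 x P = (if x j = x k then {} else P)"
    unfolding P(1) succ0_def using P(2) by auto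
  then show ?thesis by auto
qed

lemma one: "card P = 1 \<Longrightarrow> succ0 x P = P"
  by (auto simp: succ0_def card_1_singleton_iff)


interpretation M0P: prob_space M0 by (rule prob_M0)

lemma AE_VV: "finite P \<Longrightarrow> AE x in M0. x \<in> VV P"
  by (rule M0P.AE_prob_1) (simp add: measure_def VV_em)

lemma cyl_disj: "j \<in> P \<Longrightarrow> cyl P (cc j) \<inter> cyl P (dd j) = {}"
  by (auto simp: cyl_def cc_def dd_def)

lemma cc_12: "\<forall>k\<in>P. cc j k \<in> {1,2}" "\<forall>k\<in>P. dd j k \<in> {1,2}"
  by (auto simp: cc_def dd_def)

lemma em_A:
  assumes fin: "finite P" and j: "j \<in> P"
  shows "emeasure M0 (cyl P (cc j) \<union> cyl P (dd j)) = ennreal (2 / 2 ^ card P)"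
proof -
  have "emeasure M0 (cyl P (cc j) \<union> cyl P (dd j)) = emeasure M0 (cyl P (cc j)) + emeasure M0 (cyl P (dd j))"
    using fin j cyl_disj by (intro plus_emeasure[symmetric]) auto
  also have "\<dots> = ennreal ((1/2)^card P) + ennreal ((1/2)^card P)"
    using fin cc_12 by (simp add: cyl_em)
  also have "\<dots> = ennreal (2 / 2 ^ card P)"
    by (simp add: ennreal_plus[symmetric] del: ennreal_plus) (simp add: power_divide field_simps)
  finally show ?thesis .
qed

lemma int3:
  fixes \<phi> :: "nat set \<Rightarrow> ennreal"
  assumes fin: "finite P" and m: "card P \<ge> 3"
  shows "(\<integral>\<^sup>+ x. \<phi> (P - succ0 x P) \<partial>M0)
       = \<phi> P * ennreal (1 - 2 * card P / 2 ^ card P) + (\<Sum>j\<in>P. \<phi> (P - {j}) * ennreal (2 / 2 ^ card P))"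
proof -
  define A where "A j = cyl P (cc j) \<union> cyl P (dd j)" for j
  define B where "B = VV P - (\<Union>j\<in>P. A j)"
  have Aeq: "A j = {x \<in> VV P. succ0 x P = {j}}" if "j \<in> P" for j
    unfolding A_def using A3[OF fin m that] by simp
  have As[measurable]: "A j \<in> sets M0" for j unfolding A_def using fin by auto
  have UAs: "(\<Union>j\<in>P. A j) \<in> sets M0" using fin by auto
  have Bs[measurable]: "B \<in> sets M0" unfolding B_def using fin UAs by auto
  have AV: "(\<Union>j\<in>P. A j) \<subseteq> VV P" using Aeq by auto
  have disj: "disjoint_family_on A P"
    unfolding disjoint_family_on_def using Aeq by auto
  have emA: "emeasure M0 (A j) = ennreal (2 / 2 ^ card P)" if "j \<in> P" for j
    unfolding A_def using em_A[OF fin that] .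
  have emU: "emeasure M0 (\<Union>j\<in>P. A j) = ennreal (2 * card P / 2 ^ card P)"
  proof -
    have "emeasure M0 (\<Union>j\<in>P. A j) = (\<Sum>j\<in>P. emeasure M0 (A j))"
      using fin disj by (intro sum_emeasure[symmetric]) auto
    also have "\<dots> = (\<Sum>j\<in>P. ennreal (2 / 2 ^ card P))" using emA by simp
    also have "\<dots> = ennreal (2 * card P / 2 ^ card P)"
      by (simp add: ennreal_of_nat_eq_real_of_nat ennreal_mult'[symmetric] del: ennreal_mult') 
    finally show ?thesis .
  qed
  have emB: "emeasure M0 B = ennreal (1 - 2 * card P / 2 ^ card P)"
  proof -
    have "emeasure M0 B = emeasure M0 (VV P) - emeasure M0 (\<Union>j\<in>P. A j)"
      unfolding B_def using fin UAs AV by (intro emeasure_Diff) (auto simp: emU)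
    also have "\<dots> = ennreal 1 - ennreal (2 * card P / 2 ^ card P)" using fin by (simp add: VV_em emU)
    also have "\<dots> = ennreal (1 - 2 * card P / 2 ^ card P)"
      by (rule ennreal_minus) simp
    finally show ?thesis .
  qed
  have pw: "\<phi> (P - succ0 x P) = \<phi> P * indicator B x + (\<Sum>j\<in>P. \<phi> (P - {j}) * indicator (A j) x)"
    if x: "x \<in> VV P" for x
  proof -
    from part3[OF fin m x] show ?thesis
    proof
      assume s: "succ0 x P = {}"
      then have "x \<notin> A j" if "j \<in> P" for j using Aeq[OF that] by auto
      then have "x \<in> B" using x unfolding B_def by auto
      then show ?thesis using s \<open>\<And>j. j \<in> P \<Longrightarrow> x \<notin> A j\<close> by simp
    next
      assume "\<exists>j\<in>P. succ0 x P = {j}"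
      then obtain j0 where j0: "j0 \<in> P" "succ0 x P = {j0}" by blast
      have ind: "indicator (A j) x = (if j = j0 then 1 else 0 :: ennreal)" if "j \<in> P" for j
        using Aeq[OF that] j0 x by (auto simp: indicator_def)
      have "x \<notin> B" using j0 Aeq x unfolding B_def by auto
      then have "\<phi> P * indicator B x + (\<Sum>j\<in>P. \<phi> (P - {j}) * indicator (A j) x)
          = (\<Sum>j\<in>P. \<phi> (P - {j}) * (if j = j0 then 1 else 0))"
        using ind by simp
      also have "\<dots> = \<phi> (P - {j0})" using fin j0 by (simp add: if_distrib cong: if_cong)
      finally show ?thesis using j0 by simp
    qed
  qed
  have "(\<integral>\<^sup>+ x. \<phi> (P - succ0 x P) \<partial>M0)
      = (\<integral>\<^sup>+ x. \<phi> P * indicator B x + (\<Sum>j\<in>P. \<phi> (P - {j}) * indicator (A j) x) \<partial>M0)"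
    using AE_VV[OF fin] by (intro nn_integral_cong_AE) (auto elim!: eventually_mono simp: pw)
  also have "\<dots> = (\<integral>\<^sup>+ x. \<phi> P * indicator B x \<partial>M0) + (\<integral>\<^sup>+ x. (\<Sum>j\<in>P. \<phi> (P - {j}) * indicator (A j) x) \<partial>M0)"
    by (intro nn_integral_add) auto
  also have "(\<integral>\<^sup>+ x. (\<Sum>j\<in>P. \<phi> (P - {j}) * indicator (A j) x) \<partial>M0) = (\<Sum>j\<in>P. \<integral>\<^sup>+ x. \<phi> (P - {j}) * indicator (A j) x \<partial>M0)"
    by (intro nn_integral_sum) auto
  also have "\<dots> = (\<Sum>j\<in>P. \<phi> (P - {j}) * ennreal (2 / 2 ^ card P))"
    using emA by (intro sum.cong refl) (simp add: nn_integral_cmult_indicator)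
  also have "(\<integral>\<^sup>+ x. \<phi> P * indicator B x \<partial>M0) = \<phi> P * ennreal (1 - 2 * card P / 2 ^ card P)"
    by (simp add: nn_integral_cmult_indicator emB)
  finally show ?thesis .
qed

lemma int2:
  fixes \<phi> :: "nat set \<Rightarrow> ennreal"
  assumes m: "card P = 2"
  shows "(\<integral>\<^sup>+ x. \<phi> (P - succ0 x P) \<partial>M0) = \<phi> P * ennreal (1/2) + \<phi> {} * ennreal (1/2)"
proof -
  have fin: "finite P" using m by (metis card.infinite zero_neq_numeral)
  obtain j where j: "j \<in> P" using m by (metis card.empty ex_in_conv zero_neq_numeral)
  define A where "A = cyl P (cc j) \<union> cyl P (dd j)"
  define B where "B = VV P - A"
  have Aeq: "A = {x \<in> VV P. succ0 x P = P}" unfolding A_def using A2[OF m j] by simp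
  have As[measurable]: "A \<in> sets M0" unfolding A_def using fin by auto
  have Bs[measurable]: "B \<in> sets M0" unfolding B_def using fin As by auto
  have emA: "emeasure M0 A = ennreal (1/2)"
    unfolding A_def using em_A[OF fin j] m by simp
  have emB: "emeasure M0 B = ennreal (1/2)"
  proof -
    have "emeasure M0 B = emeasure M0 (VV P) - emeasure M0 A"
      unfolding B_def using fin As Aeq by (intro emeasure_Diff) (auto simp: emA)
    also have "\<dots> = ennreal 1 - ennreal (1/2)" using fin by (simp add: VV_em emA)
    also have "\<dots> = ennreal (1/2)" by (subst ennreal_minus) auto
    finally show ?thesis .
  qed
  have pw: "\<phi> (P - succ0 x P) = \<phi> P * indicator B x + \<phi> {} * indicator A x"
    if x: "x \<in> VV P" for x
  proof -
    from part2[OF m x] show ?thesis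
    proof
      assume s: "succ0 x P = {}"
      then have "x \<notin> A" using Aeq j by auto
      then have "x \<in> B" using x unfolding B_def by auto
      then show ?thesis using s \<open>x \<notin> A\<close> by simp
    next
      assume s: "succ0 x P = P"
      then have "x \<in> A" using Aeq x by auto
      then have "x \<notin> B" unfolding B_def by auto
      then show ?thesis using s \<open>x \<in> A\<close> by simp
    qed
  qed
  have "(\<integral>\<^sup>+ x. \<phi> (P - succ0 x P) \<partial>M0) = (\<integral>\<^sup>+ x. \<phi> P * indicator B x + \<phi> {} * indicator A x \<partial>M0)"
    using AE_VV[OF fin] by (intro nn_integral_cong_AE) (auto elim!: eventually_mono simp: pw)
  also have "\<dots> = (\<integral>\<^sup>+ x. \<phi> P * indicator B x \<partial>M0) + (\<integral>\<^sup>+ x. \<phi> {} * indicator A x \<partial>M0)"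
    by (intro nn_integral_add) auto
  also have "\<dots> = \<phi> P * ennreal (1/2) + \<phi> {} * ennreal (1/2)"
    by (simp add: nn_integral_cmult_indicator emA emB)
  finally show ?thesis .
qed

lemma int1:
  fixes \<phi> :: "nat set \<Rightarrow> ennreal"
  assumes m: "card P = 1"
  shows "(\<integral>\<^sup>+ x. \<phi> (P - succ0 x P) \<partial>M0) = \<phi> {}"
  using one[OF m] M0P.emeasure_space_1 by simp

fun g :: "nat \<Rightarrow> nat \<Rightarrow> real" where
  "g 0 m = 0"
| "g (Suc T) m = 1 + (if m \<ge> 3 then (1 - 2 * m / 2 ^ m) * g T m + real (m - 1) * (2 / 2 ^ m) * g T (m - 1)
                     else if m = 2 then g T 2 / 2 else 0)"

lemma pow_ge: "2 * m \<le> (2::nat) ^ m"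
proof (induct m)
  case (Suc m) then show ?case by (cases m) auto
qed simp

lemma coef_le: "2 * real m / 2 ^ m \<le> 1"
proof -
  have "real (2 * m) \<le> real (2 ^ m)" using pow_ge by (simp only: of_nat_le_iff)
  then show ?thesis by simp
qed

lemma g_nonneg: "g T m \<ge> 0"
proof (induct T arbitrary: m)
  case (Suc T)
  have "0 \<le> 1 - 2 * real m / 2 ^ m" using coef_le by simp
  then show ?case using Suc by (auto intro!: add_nonneg_nonneg mult_nonneg_nonneg)
qed simp

lemma Gt_eq:
  assumes fin: "finite P"
  shows "Gt i T P = ennreal (if i \<in> P then g T (card P) else 0)"
  using fin
proof (induct T arbitrary: P)
  case 0
  then show ?case by (simp add: Gt_def)
next
  case (Suc T)
  define \<phi> where "\<phi> Q = ennreal (if i \<in> Q then g T (card Q) else 0)" for Q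
  have "Gt i (Suc T) P = indicator P i + (\<integral>\<^sup>+ x. Gt i T (P - succ0 x P) \<partial>M0)"
    by (rule Gt_Suc[OF Suc.prems])
  also have "(\<integral>\<^sup>+ x. Gt i T (P - succ0 x P) \<partial>M0) = (\<integral>\<^sup>+ x. \<phi> (P - succ0 x P) \<partial>M0)"
    using Suc by (simp add: \<phi>_def)
  finally have rec: "Gt i (Suc T) P = indicator P i + (\<integral>\<^sup>+ x. \<phi> (P - succ0 x P) \<partial>M0)" .
  show ?case
  proof (cases "i \<in> P")
    case False
    then show ?thesis unfolding rec by (simp add: \<phi>_def)
  next
    case iP: True
    then have "card P \<ge> 1" using Suc.prems by (metis One_nat_def Suc_leI card_gt_0_iff empty_iff)
    then consider "card P = 1" | "card P = 2" | "card P \<ge> 3" by linarith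
    then show ?thesis
    proof cases
      case 1
      then show ?thesis unfolding rec int1[OF 1] using iP by (simp add: \<phi>_def)
    next
      case 2
      have e1: "ennreal (g T 2) * ennreal (1/2) = ennreal (g T 2 / 2)"
        using g_nonneg[of T 2] by (subst ennreal_mult''[symmetric]) auto
      have e: "ennreal (1 + g T 2 / 2) = 1 + ennreal (g T 2) * ennreal (1/2)"
        unfolding e1 using g_nonneg[of T 2] by (subst ennreal_plus) auto
      have gS: "g (Suc T) 2 = 1 + g T 2 / 2" by simp
      have "Gt i (Suc T) P = 1 + ennreal (g T 2) * ennreal (1/2)"
        unfolding rec int2[OF 2] using iP 2 by (simp add: \<phi>_def)
      also have "\<dots> = ennreal (g (Suc T) 2)" by (simp only: gS e)
      finally show ?thesis using iP 2 by simp
    next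
      case 3
      let ?m = "card P"
      have s: "(\<Sum>j\<in>P. \<phi> (P - {j}) * ennreal (2 / 2 ^ ?m)) = ennreal (real (?m - 1) * (2 / 2 ^ ?m) * g T (?m - 1))"
      proof -
        have "(\<Sum>j\<in>P. \<phi> (P - {j}) * ennreal (2 / 2 ^ ?m)) = \<phi> (P - {i}) * ennreal (2 / 2 ^ ?m) + (\<Sum>j\<in>P - {i}. \<phi> (P - {j}) * ennreal (2 / 2 ^ ?m))"
          using Suc.prems iP by (simp add: sum.remove)
        also have "\<phi> (P - {i}) = 0" by (simp add: \<phi>_def)
        also have "(\<Sum>j\<in>P - {i}. \<phi> (P - {j}) * ennreal (2 / 2 ^ ?m)) = (\<Sum>j\<in>P - {i}. ennreal (g T (?m - 1) * (2 / 2 ^ ?m)))"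
          using Suc.prems iP g_nonneg by (intro sum.cong refl) (auto simp: \<phi>_def ennreal_mult''[symmetric])
        also have "\<dots> = ennreal (real (?m - 1) * (2 / 2 ^ ?m) * g T (?m - 1))"
          using Suc.prems iP g_nonneg[of T "?m - 1"]
          by (subst sum_ennreal) (auto simp: card_Diff_singleton)
        finally show ?thesis by simp
      qed
      have c: "0 \<le> 1 - 2 * real ?m / 2 ^ ?m" using coef_le by simp
      have "Gt i (Suc T) P = 1 + ennreal (g T ?m) * ennreal (1 - 2 * real ?m / 2 ^ ?m) + ennreal (real (?m - 1) * (2 / 2 ^ ?m) * g T (?m - 1))"
        unfolding rec int3[OF Suc.prems 3] s using iP by (simp add: \<phi>_def add.assoc)
      also have "\<dots> = ennreal (g (Suc T) ?m)"
      proof -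
        define a where "a = g T ?m * (1 - 2 * real ?m / 2 ^ ?m)"
        define b where "b = real (?m - 1) * (2 / 2 ^ ?m) * g T (?m - 1)"
        have a0: "0 \<le> a" unfolding a_def using c g_nonneg[of T ?m] by simp
        have b0: "0 \<le> b" unfolding b_def using g_nonneg[of T "?m - 1"] by simp
        have gS: "g (Suc T) ?m = 1 + (a + b)" using 3 unfolding a_def b_def by (simp add: mult.commute)
        have m1: "ennreal (g T ?m) * ennreal (1 - 2 * real ?m / 2 ^ ?m) = ennreal a"
          unfolding a_def by (rule ennreal_mult''[symmetric]) (rule c)
        have "ennreal (g (Suc T) ?m) = ennreal 1 + (ennreal a + ennreal b)"
          unfolding gS using a0 b0 by (simp only: ennreal_plus add_nonneg_nonneg zero_le_one)
        then show ?thesis unfolding m1 b_def[symmetric] by (simp add: add.assoc)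
      qed
      finally show ?thesis using iP by simp
    qed
  qed
qed

definition BB :: "nat \<Rightarrow> real" where "BB m = (if m \<le> 1 then 1 else 2 ^ m / m)"

lemma fix_id:
  assumes m: "m \<ge> 3"
  shows "1 + (1 - 2 * real m / 2 ^ m) * BB m + real (m - 1) * (2 / 2 ^ m) * BB (m - 1) = BB m"
proof -
  obtain k where k: "m = Suc k" "k \<ge> 2" using m by (cases m) auto
  have p: "(2::real) ^ m = 2 * 2 ^ k" using k by simp
  have "real (m - 1) * (2 / 2 ^ m) * BB (m - 1) = 1"
    using k by (simp add: BB_def p field_simps)
  moreover have "(1 - 2 * real m / 2 ^ m) * BB m = BB m - 2"
  proof -
    have mp: "real m \<noteq> 0" using k by simp
    have q: "(2 * real m / 2 ^ m) * (2 ^ m / real m) = 2" using mp by (simp add: field_simps)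
    have bb: "BB m = 2 ^ m / real m" using k by (simp add: BB_def)
    have "(1 - 2 * real m / 2 ^ m) * BB m = BB m - (2 * real m / 2 ^ m) * BB m"
      by (simp only: left_diff_distrib mult_1)
    also have "(2 * real m / 2 ^ m) * BB m = 2" using q bb by simp
    finally show ?thesis .
  qed
  ultimately show ?thesis by linarith
qed

lemma coef_nn: "0 \<le> 1 - 2 * real m / 2 ^ m" using coef_le by simp

lemma g_Suc_ge3: "m \<ge> 3 \<Longrightarrow> g (Suc T) m = 1 + (1 - 2 * real m / 2 ^ m) * g T m + real (m - 1) * (2 / 2 ^ m) * g T (m - 1)"
  by simp
lemma g_Suc_2: "g (Suc T) 2 = 1 + g T 2 / 2" by simp
lemma g_Suc_1: "m < 2 \<Longrightarrow> g (Suc T) m = 1" by simp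

lemma g_mono: "g T m \<le> g (Suc T) m"
proof (induct T arbitrary: m)
  case 0 then show ?case by simp
next
  case (Suc T)
  consider "m < 2" | "m = 2" | "m \<ge> 3" by linarith
  then show ?case
  proof cases
    case 1 then show ?thesis using g_Suc_1[of m T] g_Suc_1[of m "Suc T"] by linarith
  next
    case 2
    then have m2: "m = 2" .
    show ?thesis unfolding m2 using g_Suc_2[of T] g_Suc_2[of "Suc T"] Suc.hyps[of 2] by linarith
  next
    case 3
    have a: "(1 - 2 * real m / 2 ^ m) * g T m \<le> (1 - 2 * real m / 2 ^ m) * g (Suc T) m"
      using Suc.hyps[of m] coef_nn by (rule mult_left_mono)
    have b: "real (m - 1) * (2 / 2 ^ m) * g T (m - 1) \<le> real (m - 1) * (2 / 2 ^ m) * g (Suc T) (m - 1)"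
      using Suc.hyps[of "m - 1"] by (rule mult_left_mono) simp
    show ?thesis using g_Suc_ge3[OF 3, of T] g_Suc_ge3[OF 3, of "Suc T"] a b by linarith
  qed
qed

lemma BB_pos: "BB m \<ge> 0" by (simp add: BB_def)

lemma g_bound: "m \<ge> 1 \<Longrightarrow> g T m \<le> BB m"
proof (induct T arbitrary: m)
  case 0 then show ?case by (simp add: BB_pos)
next
  case (Suc T)
  consider "m = 1" | "m = 2" | "m \<ge> 3" using Suc.prems by linarith
  then show ?case
  proof cases
    case 1 then show ?thesis by (simp add: BB_def)
  next
    case 2 then show ?thesis using Suc.hyps[of 2] by (simp add: BB_def)
  next
    case 3
    have a: "(1 - 2 * real m / 2 ^ m) * g T m \<le> (1 - 2 * real m / 2 ^ m) * BB m"
      using Suc 3 coef_nn by (intro mult_left_mono) auto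
    have b: "real (m - 1) * (2 / 2 ^ m) * g T (m - 1) \<le> real (m - 1) * (2 / 2 ^ m) * BB (m - 1)"
      using Suc.hyps[of "m - 1"] 3 by (intro mult_left_mono) auto
    have "g (Suc T) m \<le> 1 + (1 - 2 * real m / 2 ^ m) * BB m + real (m - 1) * (2 / 2 ^ m) * BB (m - 1)"
      using a b 3 by simp
    then show ?thesis using fix_id[OF 3] by simp
  qed
qed

lemma g_lim: "m \<ge> 2 \<Longrightarrow> (\<lambda>T. g T m) \<longlonglongrightarrow> BB m"
proof (induct m rule: less_induct)
  case (less m)
  have inc: "incseq (\<lambda>T. g T m)" by (rule incseq_SucI) (rule g_mono)
  have bd: "\<forall>i. g i m \<le> BB m" using g_bound less.prems by auto
  obtain L where L: "(\<lambda>T. g T m) \<longlonglongrightarrow> L"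
    using incseq_convergent[OF inc bd] by blast
  have LS: "(\<lambda>T. g (Suc T) m) \<longlonglongrightarrow> L" using LIMSEQ_Suc[OF L] .
  consider "m = 2" | "m \<ge> 3" using less.prems by linarith
  then show ?case
  proof cases
    case 1
    have "(\<lambda>T. 1 + g T 2 / 2) \<longlonglongrightarrow> 1 + L / 2"
      using L 1 by (intro tendsto_intros) auto
    then have "(\<lambda>T. g (Suc T) m) \<longlonglongrightarrow> 1 + L / 2"
      using 1 g_Suc_2 by simp
    then have "L = 1 + L / 2" using LS LIMSEQ_unique by blast
    then have "L = 2" by simp
    moreover have "BB 2 = 2" by (simp add: BB_def)
    ultimately show ?thesis using L 1 by simp
  next
    case 2
    then have m3: "m \<ge> 3" .
    let ?a = "1 - 2 * real m / 2 ^ m" and ?b = "real (m - 1) * (2 / 2 ^ m)"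
    have IH: "(\<lambda>T. g T (m - 1)) \<longlonglongrightarrow> BB (m - 1)" using less.hyps[of "m - 1"] m3 by simp
    have "(\<lambda>T. g (Suc T) m) \<longlonglongrightarrow> 1 + (?a * L + ?b * BB (m - 1))"
    proof -
      have "(\<lambda>T. 1 + (?a * g T m + ?b * g T (m - 1))) \<longlonglongrightarrow> 1 + (?a * L + ?b * BB (m - 1))"
        by (intro tendsto_intros L IH)
      then show ?thesis using m3 by simp
    qed
    then have eq: "L = 1 + (?a * L + ?b * BB (m - 1))" using LS LIMSEQ_unique by blast
    have eqB: "BB m = 1 + ?a * BB m + ?b * BB (m - 1)" using fix_id[OF m3] by simp
    have d: "?a * (L - BB m) = ?a * L - ?a * BB m" by (rule right_diff_distrib)
    have X: "L - BB m = ?a * (L - BB m)" using eq eqB d by linarith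
    have "?a \<noteq> 1" using m3 by simp
    then have "L - BB m = 0" using X mult_cancel_right1 by blast
    then have "L = BB m" by simp
    then show ?thesis using L by simp
  qed
qed

lemma pend_anti: "t \<le> t' \<Longrightarrow> pend w P t' \<subseteq> pend w P t"
  by (induct t' rule: dec_induct) auto

lemma latency_sum:
  assumes "i < n"
  shows "latency n i w = (\<Sum>t. indicator {w. i \<in> pend w {0..<n} t} w :: ennreal)"
proof (cases "\<exists>t. i \<notin> pend w {0..<n} t")
  case True
  define t0 where "t0 = (LEAST t. i \<notin> pend w {0..<n} t)"
  have t0: "i \<notin> pend w {0..<n} t0" unfolding t0_def using True by (rule LeastI_ex)
  have lt: "i \<in> pend w {0..<n} t" if "t < t0" for t
    using not_less_Least[OF that[unfolded t0_def]] by simp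
  have ge: "i \<notin> pend w {0..<n} t" if "t \<ge> t0" for t
    using pend_anti[OF that, of w "{0..<n}"] t0 by auto
  have "(\<Sum>t. indicator {w. i \<in> pend w {0..<n} t} w :: ennreal) = (\<Sum>t\<in>{..<t0}. indicator {w. i \<in> pend w {0..<n} t} w)"
    by (rule suminf_finite) (auto simp: ge indicator_def)
  also have "\<dots> = (\<Sum>t\<in>{..<t0}. 1)"
    by (intro sum.cong refl) (auto simp: lt indicator_def)
  also have "\<dots> = of_nat t0" by simp
  finally show ?thesis unfolding latency_def pending_pend using True t0_def by simp
next
  case False
  then have "(\<Sum>t. indicator {w. i \<in> pend w {0..<n} t} w :: ennreal) = (\<Sum>t. 1)"
    by (simp add: indicator_def)
  also have "\<dots> = top" using suminf_eq_SUP[of "\<lambda>_. 1::ennreal"] by (simp add: ennreal_SUP_of_nat_eq_top)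
  finally show ?thesis unfolding latency_def pending_pend using False by simp
qed

theorem lemma3:
  fixes n i :: nat
  assumes "n \<ge> 2" and "i < n"
  shows "(\<integral>\<^sup>+ w. latency n i w \<partial>channel_space) = ennreal (2 ^ n / real n)"
proof -
  let ?f = "\<lambda>t w. indicator {w. i \<in> pend w {0..<n} t} w :: ennreal"
  have meas: "\<And>t. ?f t \<in> borel_measurable channel_space" by (rule meas_ind) simp
  have "(\<integral>\<^sup>+ w. latency n i w \<partial>channel_space) = (\<integral>\<^sup>+ w. (\<Sum>t. ?f t w) \<partial>channel_space)"
    using assms(2) by (simp add: latency_sum)
  also have "\<dots> = (\<Sum>t. \<integral>\<^sup>+ w. ?f t w \<partial>channel_space)"
    by (rule nn_integral_suminf) (rule meas)
  also have "\<dots> = (SUP T. \<Sum>t<T. \<integral>\<^sup>+ w. ?f t w \<partial>channel_space)" by (rule suminf_eq_SUP)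
  also have "\<dots> = (SUP T. Gt i T {0..<n})"
    unfolding Gt_def by (intro SUP_cong refl nn_integral_sum[symmetric] meas)
  also have "\<dots> = (SUP T. ennreal (g T n))"
    using assms(2) by (simp add: Gt_eq)
  also have "\<dots> = ennreal (BB n)"
  proof -
    have inc: "incseq (\<lambda>T. ennreal (g T n))"
      by (rule incseq_SucI) (rule ennreal_leI, rule g_mono)
    have "(\<lambda>T. ennreal (g T n)) \<longlonglongrightarrow> ennreal (BB n)"
      using g_lim[OF assms(1)] by (rule tendsto_ennrealI)
    then show ?thesis using LIMSEQ_SUP[OF inc] LIMSEQ_unique by blast
  qed
  also have "\<dots> = ennreal (2 ^ n / real n)" using assms(1) by (simp add: BB_def)
  finally show ?thesis .
qed


end
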